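(* Let $\mathcal{C}$ be a concept class over $\{\pm1\}^n$, $\mathcal{D}$ a class of distributions closed under restrictions, and $D^\star$ a distribution that has a depth-$d$, size-$s$ subcube partition $L^\star=(\rho_1,\dots,\rho_s)$ into $\mathcal{D}$ (ordered arbitrarily). Let $A$ be a base learner that learns $\mathcal{C}$ over distributions in $\mathcal{D}$ to expected error $\le\frac{\varepsilon}{\log(1/\varepsilon)}$ with sample complexity $m$. Let \[ m_{\mathrm{train}}\ge s\cdot\frac{\log(1/\varepsilon)}{\varepsilon}\cdot\max(2m,8), \] let $f\in\mathcal{C}$, let $S_{\mathrm{train}}$ consist of $m_{\mathrm{train}}$ i.i.d. examples from $D^\star_f$, and let $\mathcal{H}$ be the random mapping $\rho\mapsto A((S_{\mathrm{train}})_\rho)$ over all restrictions $\rho$ of depth $\le d$ (randomness from $S_{\mathrm{train}}$ and $A$). Then \[ \mathbb{E}_{\mathcal{H}}\left[\mathrm{error}(L^\star\circ\mathcal{H},D^\star_f)\right]\le\frac{2\varepsilon}{\log(1/\varepsilon)}. \]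
   Context: A restriction is $\rho\in\{\pm1,\star\}^n$; $x\in\rho$ means $x_i=\rho_i$ or $\rho_i=\star$ for all $i$; depth of $\rho$ = number of non-$\star$ coordinates. $D_\rho$ is $D$ conditioned on $x\in\rho$; for labeled $S$, $S_\rho=\{(x,y)\in S:x\in\rho\}$. $\mathcal{D}$ is closed under restrictions if $D\in\mathcal{D}\Rightarrow D_\rho\in\mathcal{D}$ for all $\rho$. $D_f$ is the distribution of $(x,f(x))$, $x\sim D$; $\mathrm{error}(h,P)=\Pr_{(x,y)\sim P}[h(x)\neq y]$ ($\bot$ counts as an error). $A$ learns $\mathcal{C}$ to expected error $\varepsilon'$ over $D$ with $m$ samples if for every $f\in\mathcal{C}$, given (at least) $m$ i.i.d. samples from $D_f$, its output $h$ has $\mathbb{E}[\mathrm{error}(h,D_f)]\le\varepsilon'$. $D^\star$ has a depth-$d$, size-$s$ subcube partition into $\mathcal{D}$ if there are $s$ pairwise disjoint restrictions $\rho_1,\dots,\rho_s$, each of depth $\le d$, such that every $x$ in the support of $D^\star$ lies in some $\rho_i$ and $(D^\star)_{\rho_i}\in\mathcal{D}$ for all $i$. For an ordered list $L$ of restrictions, $L\circ\mathcal{H}(x)=\mathcal{H}(\rho)(x)$ for the first $\rho\in L$ containing $x$, and $\bot$ if none does. *)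

theory Defs
  imports "HOL-Probability.Probability"
begin

text \<open>Points of the cube \{+-1\}^n are boolean lists of length n (True = +1, False = -1).
  A restriction is a list of length n over bool option (None = star).\<close>

type_synonym point = "bool list"
type_synonym restr = "bool option list"
type_synonym hyp = "point \<Rightarrow> bool option"   \<comment> \<open>None = bottom\<close>
type_synonym sample = "(point \<times> bool) list"

definition cube :: "nat \<Rightarrow> point set" where
  "cube n = {x. length x = n}"

definition is_restriction :: "nat \<Rightarrow> restr \<Rightarrow> bool" where
  "is_restriction n \<rho> \<longleftrightarrow> length \<rho> = n"

definition in_restr :: "point \<Rightarrow> restr \<Rightarrow> bool" where
  "in_restr x \<rho> \<longleftrightarrow> length x = length \<rho> \<and>
     (\<forall>i < length \<rho>. \<rho> ! i = None \<or> \<rho> ! i = Some (x ! i))"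

definition pts :: "restr \<Rightarrow> point set" where
  "pts \<rho> = {x. in_restr x \<rho>}"

definition depth :: "restr \<Rightarrow> nat" where
  "depth \<rho> = card {i. i < length \<rho> \<and> \<rho> ! i \<noteq> None}"

text \<open>D conditioned on x in rho (only meaningful when the event has positive probability).\<close>
definition restrict_dist :: "point pmf \<Rightarrow> restr \<Rightarrow> point pmf" where
  "restrict_dist D \<rho> = cond_pmf D (pts \<rho>)"

definition restrict_sample :: "sample \<Rightarrow> restr \<Rightarrow> sample" where
  "restrict_sample S \<rho> = filter (\<lambda>(x, y). in_restr x \<rho>) S"

definition closed_under_restrictions :: "nat \<Rightarrow> point pmf set \<Rightarrow> bool" where
  "closed_under_restrictions n \<D> \<longleftrightarrow>
     (\<forall>D \<in> \<D>. \<forall>\<rho>. is_restriction n \<rho> \<and> set_pmf D \<inter> pts \<rho> \<noteq> {} \<longrightarrow>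
        restrict_dist D \<rho> \<in> \<D>)"

definition labeled :: "point pmf \<Rightarrow> (point \<Rightarrow> bool) \<Rightarrow> (point \<times> bool) pmf" where
  "labeled D f = map_pmf (\<lambda>x. (x, f x)) D"

definition error :: "hyp \<Rightarrow> (point \<times> bool) pmf \<Rightarrow> real" where
  "error h P = measure_pmf.prob P {(x, y). h x \<noteq> Some y}"

definition learns :: "(sample \<Rightarrow> hyp pmf) \<Rightarrow> (point \<Rightarrow> bool) set \<Rightarrow> point pmf set
                       \<Rightarrow> real \<Rightarrow> nat \<Rightarrow> bool" where
  "learns A \<C> \<D> \<epsilon>' m \<longleftrightarrow>
     (\<forall>D \<in> \<D>. \<forall>f \<in> \<C>. \<forall>k \<ge> m.
        measure_pmf.expectation
          (replicate_pmf k (labeled D f) \<bind> A) (\<lambda>h. error h (labeled D f)) \<le> \<epsilon>')"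

definition subcube_partition :: "nat \<Rightarrow> point pmf \<Rightarrow> point pmf set \<Rightarrow> nat \<Rightarrow> nat \<Rightarrow> restr list \<Rightarrow> bool" where
  "subcube_partition n Dstar \<D> d s L \<longleftrightarrow>
     length L = s \<and>
     (\<forall>\<rho> \<in> set L. is_restriction n \<rho> \<and> depth \<rho> \<le> d) \<and>
     (\<forall>i < length L. \<forall>j < length L. i \<noteq> j \<longrightarrow> pts (L ! i) \<inter> pts (L ! j) = {}) \<and>
     (\<forall>x \<in> set_pmf Dstar. \<exists>\<rho> \<in> set L. in_restr x \<rho>) \<and>
     (\<forall>\<rho> \<in> set L. set_pmf Dstar \<inter> pts \<rho> \<noteq> {} \<longrightarrow> restrict_dist Dstar \<rho> \<in> \<D>)"

definition list_compose :: "restr list \<Rightarrow> (restr \<Rightarrow> hyp) \<Rightarrow> hyp" where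
  "list_compose L H x = (case find (in_restr x) L of None \<Rightarrow> None | Some \<rho> \<Rightarrow> H \<rho> x)"

definition restrs_upto :: "nat \<Rightarrow> nat \<Rightarrow> restr set" where
  "restrs_upto n d = {\<rho>. is_restriction n \<rho> \<and> depth \<rho> \<le> d}"

definition random_H :: "(sample \<Rightarrow> hyp pmf) \<Rightarrow> nat \<Rightarrow> nat \<Rightarrow> nat \<Rightarrow> (point \<times> bool) pmf
                         \<Rightarrow> (restr \<Rightarrow> hyp) pmf" where
  "random_H A n d mtrain P =
     replicate_pmf mtrain P \<bind>
       (\<lambda>S. Pi_pmf (restrs_upto n d) (\<lambda>_. None) (\<lambda>\<rho>. A (restrict_sample S \<rho>)))"

end

theory Submission
  imports Defs
begin

lemma integrable_pmf_bounded:
  fixes h :: "'a \<Rightarrow> real"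
  assumes "\<And>y. \<bar>h y\<bar> \<le> B"
  shows "integrable (measure_pmf M) h"
  by (rule measure_pmf.integrable_const_bound[where B=B]) (auto simp: assms)

lemma expectation_bind_pmf:
  fixes h :: "'b \<Rightarrow> real"
  assumes "\<And>y. \<bar>h y\<bar> \<le> B"
  shows "measure_pmf.expectation (bind_pmf M F) h =
         measure_pmf.expectation M (\<lambda>x. measure_pmf.expectation (F x) h)"
  unfolding measure_pmf_bind
  by (rule integral_bind[where B=B and B'=1 and K="count_space UNIV"])
     (auto simp: assms measure_pmf.emeasure_space_1 measure_pmf.finite_measure_axioms space_subprob_algebra measure_pmf.subprob_space_axioms)

lemma mix_pmf:
  assumes ne: "set_pmf P \<inter> Q \<noteq> {}"
  shows "P \<bind> (\<lambda>x. if x \<in> Q then G x else H) =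
         bernoulli_pmf (measure_pmf.prob P Q) \<bind> (\<lambda>b. if b then cond_pmf P Q \<bind> G else H)"
proof (cases "measure_pmf.prob P Q = 1")
  case True
  have "pmf P x = 0" if "x \<notin> Q" for x
  proof -
    have "measure_pmf.prob P (-Q) = 0" using True measure_pmf.prob_compl[of Q P] by (simp add: Compl_eq_Diff_UNIV)
    moreover have "pmf P x \<le> measure_pmf.prob P (-Q)"
      using that by (simp add: measure_pmf_single[symmetric] measure_pmf.finite_measure_mono)
    ultimately show ?thesis using pmf_nonneg[of P x] by linarith
  qed
  hence "set_pmf P \<subseteq> Q" by (auto simp: set_pmf_eq)
  hence eq: "cond_pmf P Q = P"
    using ne True by (intro pmf_eqI) (auto simp: pmf_cond set_pmf_eq)
  have b1: "bernoulli_pmf 1 = return_pmf True"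
    by (rule pmf_eqI) (auto simp: indicator_def)
  have "P \<bind> (\<lambda>x. if x \<in> Q then G x else H) = P \<bind> G"
    using \<open>set_pmf P \<subseteq> Q\<close> by (intro bind_pmf_cong) auto
  then show ?thesis using True by (simp add: eq b1 bind_return_pmf)
next
  case False
  define p where "p = measure_pmf.prob P Q"
  have p1: "p < 1" using False measure_pmf.prob_le_1[of P Q] unfolding p_def by linarith
  have p0: "0 < p" using ne unfolding p_def by (auto intro: measure_pmf_posI)
  have ne2: "set_pmf P \<inter> {x. x \<notin> Q} \<noteq> {}"
  proof
    assume "set_pmf P \<inter> {x. x \<notin> Q} = {}"
    hence "set_pmf P \<subseteq> Q" by auto
    hence "p = 1" unfolding p_def by (simp add: measure_pmf.prob_eq_1 AE_measure_pmf_iff subset_iff)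
    with p1 show False by simp
  qed
  have decomp: "bernoulli_pmf p \<bind> (\<lambda>b. cond_pmf P {x. b = (x \<in> Q)}) = P"
  proof (rule bind_cond_pmf_cancel)
    fix b assume "b \<in> set_pmf (bernoulli_pmf p)"
    show "set_pmf P \<inter> {x. b = (x \<in> Q)} \<noteq> {}" using ne ne2 by (cases b) auto
  next
    fix y show "set_pmf (bernoulli_pmf p) \<inter> {b. b = (y \<in> Q)} \<noteq> {}" using p0 p1 by auto
  next
    fix b y assume "b \<in> set_pmf (bernoulli_pmf p)" "y \<in> set_pmf P" "b = (y \<in> Q)"
    show "measure_pmf.prob P {x. b = (x \<in> Q)} = measure_pmf.prob (bernoulli_pmf p) {b. b = (y \<in> Q)}"
    proof -
      have c: "measure_pmf.prob P (UNIV - Q) = 1 - measure_pmf.prob P Q"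
        using measure_pmf.prob_compl[of Q P] by simp
      have s1: "{b. b} = {True}" "{b. \<not> b} = {False}" "{x. x \<notin> Q} = UNIV - Q" by auto
      show ?thesis using p0 p1 \<open>b = (y \<in> Q)\<close>
        by (cases b) (auto simp: s1 p_def measure_pmf_single c)
    qed
  qed
  have "P \<bind> (\<lambda>x. if x \<in> Q then G x else H) =
        bernoulli_pmf p \<bind> (\<lambda>b. cond_pmf P {x. b = (x \<in> Q)} \<bind> (\<lambda>x. if x \<in> Q then G x else H))"
    by (subst decomp[symmetric]) (simp add: bind_assoc_pmf)
  also have "\<dots> = bernoulli_pmf p \<bind> (\<lambda>b. if b then cond_pmf P Q \<bind> G else H)"
  proof (intro bind_pmf_cong refl)
    fix b assume "b \<in> set_pmf (bernoulli_pmf p)"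
    show "cond_pmf P {x. b = (x \<in> Q)} \<bind> (\<lambda>x. if x \<in> Q then G x else H) =
          (if b then cond_pmf P Q \<bind> G else H)"
    proof (cases b)
      case True
      thus ?thesis using ne by (auto simp: set_cond_pmf[OF ne] intro!: bind_pmf_cong)
    next
      case False
      have "cond_pmf P {x. x \<notin> Q} \<bind> (\<lambda>x. if x \<in> Q then G x else H) = cond_pmf P {x. x \<notin> Q} \<bind> (\<lambda>x. H)"
        using ne2 by (intro bind_pmf_cong) (auto simp: set_cond_pmf[OF ne2])
      thus ?thesis using False by simp
    qed
  qed
  finally show ?thesis by (simp add: p_def)
qed

lemma filter_replicate_pmf:
  assumes ne: "set_pmf P \<inter> Q \<noteq> {}"
  shows "map_pmf (filter (\<lambda>x. x \<in> Q)) (replicate_pmf N P) =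
         binomial_pmf N (measure_pmf.prob P Q) \<bind> (\<lambda>k. replicate_pmf k (cond_pmf P Q))"
proof (induction N)
  case 0
  have "measure_pmf.prob P Q \<in> {0..1}" by auto
  then show ?case by (simp add: binomial_pmf_0 bind_return_pmf)
next
  case (Suc N)
  define p where "p = measure_pmf.prob P Q"
  define B where "B = binomial_pmf N p"
  define PQ where "PQ = cond_pmf P Q"
  have p01: "p \<in> {0..1}" by (auto simp: p_def)
  have "map_pmf (filter (\<lambda>x. x \<in> Q)) (replicate_pmf (Suc N) P) =
        P \<bind> (\<lambda>x. map_pmf (\<lambda>ys. if x \<in> Q then x # ys else ys)
                 (map_pmf (filter (\<lambda>x. x \<in> Q)) (replicate_pmf N P)))"
    by (simp add: map_pmf_def bind_assoc_pmf bind_return_pmf)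
  also have "\<dots> = P \<bind> (\<lambda>x. if x \<in> Q then B \<bind> (\<lambda>k. map_pmf (Cons x) (replicate_pmf k PQ))
                   else B \<bind> (\<lambda>k. replicate_pmf k PQ))"
    unfolding Suc B_def PQ_def p_def
    by (intro bind_pmf_cong refl) (auto simp: map_bind_pmf)
  also have "\<dots> = bernoulli_pmf p \<bind> (\<lambda>b. if b then PQ \<bind> (\<lambda>x. B \<bind> (\<lambda>k. map_pmf (Cons x) (replicate_pmf k PQ)))
                   else B \<bind> (\<lambda>k. replicate_pmf k PQ))"
    unfolding p_def PQ_def by (rule mix_pmf[OF ne])
  also have "\<dots> = bernoulli_pmf p \<bind> (\<lambda>b. B \<bind> (\<lambda>k. replicate_pmf ((if b then 1 else 0) + k) PQ))"
  proof (intro bind_pmf_cong refl)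
    fix b :: bool
    show "(if b then PQ \<bind> (\<lambda>x. B \<bind> (\<lambda>k. map_pmf (Cons x) (replicate_pmf k PQ)))
                   else B \<bind> (\<lambda>k. replicate_pmf k PQ)) =
          B \<bind> (\<lambda>k. replicate_pmf ((if b then 1 else 0) + k) PQ)"
      by (cases b) (simp_all add: bind_commute_pmf[of PQ B] map_pmf_def)
  qed
  also have "\<dots> = binomial_pmf (Suc N) p \<bind> (\<lambda>k. replicate_pmf k PQ)"
    by (simp add: binomial_pmf_Suc[OF p01] B_def bind_assoc_pmf bind_return_pmf)
  finally show ?case by (simp add: p_def PQ_def)
qed

lemma binomial_tail:
  assumes p: "p \<in> {0..1}"
  shows "p * measure_pmf.prob (binomial_pmf N p) {..<m} \<le> real m / real (Suc N)"
proof -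
  have p0: "0 \<le> p" "p \<le> 1" using p by auto
  have key: "p * pmf (binomial_pmf N p) k \<le> real m / real (Suc N) * pmf (binomial_pmf (Suc N) p) (Suc k)"
    if "k < m" for k
  proof -
    have e: "real (Suc N) * real (N choose k) = real (Suc N choose Suc k) * real (Suc k)"
      using Suc_times_binomial_eq[of N k] by (metis of_nat_mult)
    have "p * pmf (binomial_pmf N p) k * real (Suc N) =
          real (Suc k) * pmf (binomial_pmf (Suc N) p) (Suc k)"
    proof -
      have "p * pmf (binomial_pmf N p) k * real (Suc N) =
            (real (Suc N) * real (N choose k)) * (p ^ Suc k * (1 - p) ^ (N - k))"
        by (simp add: pmf_binomial[OF p0] del: of_nat_Suc)
      also have "\<dots> = real (Suc k) * (real (Suc N choose Suc k) * p ^ Suc k * (1 - p) ^ (Suc N - Suc k))"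
        unfolding e by simp
      also have "\<dots> = real (Suc k) * pmf (binomial_pmf (Suc N) p) (Suc k)"
        by (simp add: pmf_binomial[OF p0] del: of_nat_Suc)
      finally show ?thesis .
    qed
    also have "\<dots> \<le> real m * pmf (binomial_pmf (Suc N) p) (Suc k)"
      using that by (intro mult_right_mono) auto
    finally show ?thesis by (simp add: field_simps)
  qed
  have "p * measure_pmf.prob (binomial_pmf N p) {..<m} = (\<Sum>k<m. p * pmf (binomial_pmf N p) k)"
    by (simp add: measure_measure_pmf_finite sum_distrib_left)
  also have "\<dots> \<le> (\<Sum>k<m. real m / real (Suc N) * pmf (binomial_pmf (Suc N) p) (Suc k))"
    by (intro sum_mono key) auto
  also have "\<dots> = real m / real (Suc N) * measure_pmf.prob (binomial_pmf (Suc N) p) (Suc ` {..<m})"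
    by (simp add: measure_measure_pmf_finite sum_distrib_left sum.reindex)
  also have "\<dots> \<le> real m / real (Suc N) * 1"
    by (intro mult_left_mono) auto
  finally show ?thesis by simp
qed

lemma measure_cond_pmf:
  assumes "set_pmf p \<inter> s \<noteq> {}"
  shows "measure_pmf.prob (cond_pmf p s) A = measure_pmf.prob p (s \<inter> A) / measure_pmf.prob p s"
  using emeasure_measure_pmf_not_zero[OF assms]
  by (simp add: cond_pmf.rep_eq[OF assms] measure_pmf.emeasure_finite)

lemma finite_restrs_upto: "finite (restrs_upto n d)"
proof -
  have "restrs_upto n d \<subseteq> {xs. set xs \<subseteq> (UNIV :: bool option set) \<and> length xs = n}"
    by (auto simp: restrs_upto_def is_restriction_def)
  moreover have "finite {xs. set xs \<subseteq> (UNIV :: bool option set) \<and> length xs = n}"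
    by (rule finite_lists_length_eq) simp
  ultimately show ?thesis by (rule finite_subset)
qed

lemma error_labeled:
  "error h (labeled D f) = measure_pmf.prob D {x. h x \<noteq> Some (f x)}"
  unfolding error_def labeled_def by (simp add: vimage_def)

lemma per_restr:
  assumes rho: "\<rho> \<in> restrs_upto n d"
    and inD: "set_pmf D \<inter> pts \<rho> \<noteq> {} \<Longrightarrow> restrict_dist D \<rho> \<in> \<D>"
    and learner: "learns A \<C> \<D> e m" and e: "0 \<le> e" and f: "f \<in> \<C>"
  shows "measure_pmf.expectation (random_H A n d N (labeled D f))
           (\<lambda>H. measure_pmf.prob D {x. in_restr x \<rho> \<and> H \<rho> x \<noteq> Some (f x)})
         \<le> measure_pmf.prob D (pts \<rho>) * e + real m / real (Suc N)"
proof -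
  define pr where "pr = measure_pmf.prob D (pts \<rho>)"
  define \<phi> where "\<phi> h = measure_pmf.prob D {x. in_restr x \<rho> \<and> h x \<noteq> Some (f x)}" for h :: hyp
  define P where "P = labeled D f"
  have \<phi>b: "\<bar>\<phi> h\<bar> \<le> 1" for h by (simp add: \<phi>_def)
  have \<phi>pr: "\<phi> h \<le> pr" for h
    unfolding \<phi>_def pr_def pts_def by (intro measure_pmf.finite_measure_mono) auto
  have mapH: "map_pmf (\<lambda>H. H \<rho>) (random_H A n d N P) =
              replicate_pmf N P \<bind> (\<lambda>S. A (restrict_sample S \<rho>))"
    unfolding random_H_def map_bind_pmf
    by (simp add: Pi_pmf_component[OF finite_restrs_upto] rho)
  have E: "measure_pmf.expectation (random_H A n d N P) (\<lambda>H. \<phi> (H \<rho>)) =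
           measure_pmf.expectation (replicate_pmf N P \<bind> (\<lambda>S. A (restrict_sample S \<rho>))) \<phi>"
    by (simp flip: mapH)
  show ?thesis
  proof (cases "pr = 0")
    case True
    have "measure_pmf.expectation (random_H A n d N P) (\<lambda>H. \<phi> (H \<rho>)) \<le>
          measure_pmf.expectation (random_H A n d N P) (\<lambda>H. pr)"
      by (intro integral_mono integrable_pmf_bounded[where B=1] \<phi>pr) (auto simp: \<phi>b pr_def)
    also have "\<dots> = 0" using True by simp
    finally have "measure_pmf.expectation (random_H A n d N P) (\<lambda>H. \<phi> (H \<rho>)) \<le> 0" .
    moreover have "0 \<le> real m / real (Suc N)" by simp
    moreover have "pr * e = 0" using True by simp
    ultimately show ?thesis unfolding \<phi>_def P_def pr_def by linarith
  next
    case False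
    have ne: "set_pmf D \<inter> pts \<rho> \<noteq> {}" using False measure_pmf_zero_iff unfolding pr_def by blast
    define Q where "Q = {(x, y :: bool). in_restr x \<rho>}"
    define D\<rho> where "D\<rho> = restrict_dist D \<rho>"
    have D\<rho>: "D\<rho> \<in> \<D>" using inD[OF ne] by (simp add: D\<rho>_def)
    have vQ: "(\<lambda>x. (x, f x)) -` Q = pts \<rho>" by (auto simp: Q_def pts_def)
    have neQ: "set_pmf P \<inter> Q \<noteq> {}" using ne by (auto simp: P_def labeled_def Q_def pts_def)
    have prQ: "measure_pmf.prob P Q = pr" by (simp add: P_def labeled_def vQ pr_def)
    have PQ: "cond_pmf P Q = labeled D\<rho> f"
      unfolding P_def labeled_def D\<rho>_def restrict_dist_def
      using ne vQ by (subst cond_map_pmf) auto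
    have rs: "restrict_sample S \<rho> = filter (\<lambda>z. z \<in> Q) S" for S
      by (simp add: restrict_sample_def Q_def case_prod_unfold)
    have \<phi>err: "\<phi> h = pr * error h (labeled D\<rho> f)" for h
    proof -
      have "error h (labeled D\<rho> f) = measure_pmf.prob D (pts \<rho> \<inter> {x. h x \<noteq> Some (f x)}) / pr"
        unfolding error_labeled D\<rho>_def restrict_dist_def pr_def by (rule measure_cond_pmf[OF ne])
      moreover have "pts \<rho> \<inter> {x. h x \<noteq> Some (f x)} = {x. in_restr x \<rho> \<and> h x \<noteq> Some (f x)}"
        by (auto simp: pts_def)
      ultimately show ?thesis using False by (simp add: \<phi>_def)
    qed
    define B where "B = binomial_pmf N pr"
    have "replicate_pmf N P \<bind> (\<lambda>S. A (restrict_sample S \<rho>)) =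
          map_pmf (filter (\<lambda>z. z \<in> Q)) (replicate_pmf N P) \<bind> A"
      by (simp add: rs map_pmf_def bind_assoc_pmf bind_return_pmf)
    also have "\<dots> = B \<bind> (\<lambda>k. replicate_pmf k (labeled D\<rho> f) \<bind> A)"
      by (simp add: filter_replicate_pmf[OF neQ] prQ PQ B_def bind_assoc_pmf)
    finally have eqd: "replicate_pmf N P \<bind> (\<lambda>S. A (restrict_sample S \<rho>)) =
          B \<bind> (\<lambda>k. replicate_pmf k (labeled D\<rho> f) \<bind> A)" .
    have inner: "measure_pmf.expectation (replicate_pmf k (labeled D\<rho> f) \<bind> A) \<phi>
                 \<le> pr * e + pr * indicator {..<m} k" for k
    proof -
      have "measure_pmf.expectation (replicate_pmf k (labeled D\<rho> f) \<bind> A) \<phi> =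
            pr * measure_pmf.expectation (replicate_pmf k (labeled D\<rho> f) \<bind> A) (\<lambda>h. error h (labeled D\<rho> f))"
        unfolding \<phi>err by (rule integral_mult_right_zero)
      also have "\<dots> \<le> pr * (e + indicator {..<m} k)"
      proof (intro mult_left_mono)
        show "0 \<le> pr" by (simp add: pr_def)
        show "measure_pmf.expectation (replicate_pmf k (labeled D\<rho> f) \<bind> A) (\<lambda>h. error h (labeled D\<rho> f))
              \<le> e + indicator {..<m} k"
        proof (cases "m \<le> k")
          case True
          then show ?thesis using learner D\<rho> f unfolding learns_def by auto
        next
          case False
          have "measure_pmf.expectation (replicate_pmf k (labeled D\<rho> f) \<bind> A) (\<lambda>h. error h (labeled D\<rho> f))
                \<le> measure_pmf.expectation (replicate_pmf k (labeled D\<rho> f) \<bind> A) (\<lambda>h. 1)"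
            by (intro integral_mono integrable_pmf_bounded[where B=1]) (auto simp: error_def)
          then show ?thesis using False e by simp
        qed
      qed
      finally show ?thesis by (simp add: algebra_simps)
    qed
    have "measure_pmf.expectation (random_H A n d N P) (\<lambda>H. \<phi> (H \<rho>)) =
          measure_pmf.expectation B (\<lambda>k. measure_pmf.expectation (replicate_pmf k (labeled D\<rho> f) \<bind> A) \<phi>)"
      unfolding E eqd by (rule expectation_bind_pmf[where B=1]) (rule \<phi>b)
    also have "\<dots> \<le> measure_pmf.expectation B (\<lambda>k. pr * e + pr * indicator {..<m} k)"
    proof (intro integral_mono inner)
      show "integrable (measure_pmf B) (\<lambda>k. measure_pmf.expectation (replicate_pmf k (labeled D\<rho> f) \<bind> A) \<phi>)"
      proof (rule integrable_pmf_bounded[where B=1])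
        fix k
        have "\<bar>measure_pmf.expectation (replicate_pmf k (labeled D\<rho> f) \<bind> A) \<phi>\<bar> \<le>
              measure_pmf.expectation (replicate_pmf k (labeled D\<rho> f) \<bind> A) (\<lambda>h. \<bar>\<phi> h\<bar>)"
          by (rule integral_abs_bound)
        also have "\<dots> \<le> measure_pmf.expectation (replicate_pmf k (labeled D\<rho> f) \<bind> A) (\<lambda>h. 1)"
          by (intro integral_mono integrable_pmf_bounded[where B=1]) (auto simp: \<phi>b)
        finally show "\<bar>measure_pmf.expectation (replicate_pmf k (labeled D\<rho> f) \<bind> A) \<phi>\<bar> \<le> 1" by simp
      qed
      have "pr \<le> 1" by (simp add: pr_def)
      then show "integrable (measure_pmf B) (\<lambda>k. pr * e + pr * indicator {..<m} k)"
        using e by (intro integrable_pmf_bounded[where B="\<bar>pr * e\<bar> + 1"])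
           (auto simp: indicator_def abs_le_iff pr_def)
    qed
    also have "\<dots> = pr * e + pr * measure_pmf.prob B {..<m}"
    proof -
      have i1: "integrable (measure_pmf B) (\<lambda>k. pr * indicator {..<m} k :: real)"
        by (rule integrable_pmf_bounded[where B="\<bar>pr\<bar>"]) (auto simp: indicator_def)
      have "measure_pmf.expectation B (\<lambda>k. pr * e + pr * indicator {..<m} k) =
            measure_pmf.expectation B (\<lambda>k. pr * e) + measure_pmf.expectation B (\<lambda>k. pr * indicator {..<m} k)"
        by (rule Bochner_Integration.integral_add[OF _ i1]) simp
      also have "\<dots> = pr * e + pr * measure_pmf.prob B {..<m}"
        by simp
      finally show ?thesis .
    qed
    also have "\<dots> \<le> pr * e + real m / real (Suc N)"
      using binomial_tail[of pr N m] by (simp add: B_def pr_def)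
    finally show ?thesis by (simp add: \<phi>_def P_def pr_def)
  qed
qed

theorem corollary7p4:
  fixes n d s m mtrain :: nat
    and \<C> :: "(point \<Rightarrow> bool) set"
    and \<D> :: "point pmf set"
    and Dstar :: "point pmf"
    and L :: "restr list"
    and A :: "sample \<Rightarrow> hyp pmf"
    and \<epsilon> :: real
    and f :: "point \<Rightarrow> bool"
  assumes eps: "0 < \<epsilon>" "\<epsilon> < 1"
    and D_cube: "\<forall>D \<in> \<D>. set_pmf D \<subseteq> cube n"
    and closed: "closed_under_restrictions n \<D>"
    and part: "subcube_partition n Dstar \<D> d s L"
    and learner: "learns A \<C> \<D> (\<epsilon> / ln (1 / \<epsilon>)) m"
    and mtrain: "real mtrain \<ge> real s * (ln (1 / \<epsilon>) / \<epsilon>) * max (2 * real m) 8"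
    and f: "f \<in> \<C>"
  shows "measure_pmf.expectation (random_H A n d mtrain (labeled Dstar f))
           (\<lambda>H. error (list_compose L H) (labeled Dstar f)) \<le> 2 * \<epsilon> / ln (1 / \<epsilon>)"
proof -
  define e where "e = \<epsilon> / ln (1 / \<epsilon>)"
  define lg where "lg = ln (1 / \<epsilon>)"
  have lpos: "0 < lg" using eps by (simp add: lg_def)
  have e0: "0 \<le> e" using eps lpos by (simp add: e_def lg_def)
  define P where "P = labeled Dstar f"
  define RH where "RH = random_H A n d mtrain P"
  define g where "g \<rho> H = measure_pmf.prob Dstar {x. in_restr x \<rho> \<and> H \<rho> x \<noteq> Some (f x)}"
    for \<rho> :: restr and H :: "restr \<Rightarrow> hyp"
  define pr where "pr \<rho> = measure_pmf.prob Dstar (pts \<rho>)" for \<rho>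
  have lenL: "length L = s"
    and Lr: "\<And>\<rho>. \<rho> \<in> set L \<Longrightarrow> is_restriction n \<rho> \<and> depth \<rho> \<le> d"
    and disj: "\<And>i j. i < length L \<Longrightarrow> j < length L \<Longrightarrow> i \<noteq> j \<Longrightarrow> pts (L ! i) \<inter> pts (L ! j) = {}"
    and cover: "\<And>x. x \<in> set_pmf Dstar \<Longrightarrow> \<exists>\<rho> \<in> set L. in_restr x \<rho>"
    and inD: "\<And>\<rho>. \<rho> \<in> set L \<Longrightarrow> set_pmf Dstar \<inter> pts \<rho> \<noteq> {} \<Longrightarrow> restrict_dist Dstar \<rho> \<in> \<D>"
    using part unfolding subcube_partition_def by blast+
  have gb: "\<bar>g \<rho> H\<bar> \<le> 1" for \<rho> H by (simp add: g_def)
  have step1: "error (list_compose L H) P \<le> (\<Sum>\<rho>\<in>set L. g \<rho> H)" for H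
  proof -
    let ?X = "{x. list_compose L H x \<noteq> Some (f x)}"
    have "error (list_compose L H) P = measure_pmf.prob Dstar ?X" by (simp add: P_def error_labeled)
    also have "\<dots> = measure_pmf.prob Dstar (?X \<inter> set_pmf Dstar)" by (simp add: measure_Int_set_pmf)
    also have "\<dots> \<le> measure_pmf.prob Dstar (\<Union>\<rho>\<in>set L. {x. in_restr x \<rho> \<and> H \<rho> x \<noteq> Some (f x)})"
    proof (rule measure_pmf.finite_measure_mono)
      show "?X \<inter> set_pmf Dstar \<subseteq> (\<Union>\<rho>\<in>set L. {x. in_restr x \<rho> \<and> H \<rho> x \<noteq> Some (f x)})"
      proof
        fix x assume x: "x \<in> ?X \<inter> set_pmf Dstar"
        then obtain \<rho>0 where "\<rho>0 \<in> set L" "in_restr x \<rho>0" using cover by blast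
        hence "find (in_restr x) L \<noteq> None" by (auto simp: find_None_iff)
        then obtain \<rho> where fr: "find (in_restr x) L = Some \<rho>" by blast
        hence "\<rho> \<in> set L" "in_restr x \<rho>" by (auto simp: find_Some_iff)
        moreover have "H \<rho> x \<noteq> Some (f x)" using x fr by (simp add: list_compose_def)
        ultimately show "x \<in> (\<Union>\<rho>\<in>set L. {x. in_restr x \<rho> \<and> H \<rho> x \<noteq> Some (f x)})" by blast
      qed
    qed simp
    also have "\<dots> \<le> (\<Sum>\<rho>\<in>set L. g \<rho> H)"
      unfolding g_def by (rule measure_pmf.finite_measure_subadditive_finite) auto
    finally show ?thesis .
  qed
  have step3: "measure_pmf.expectation RH (g \<rho>) \<le> pr \<rho> * e + real m / real (Suc mtrain)"
    if "\<rho> \<in> set L" for \<rho>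
    unfolding RH_def P_def g_def pr_def e_def
  proof (rule per_restr[where \<C>=\<C> and \<D>=\<D>])
    show "\<rho> \<in> restrs_upto n d" using Lr[OF that] by (simp add: restrs_upto_def)
  qed (use inD[OF that] learner f e0 in \<open>auto simp: e_def\<close>)
  have sumpr: "(\<Sum>\<rho>\<in>set L. pr \<rho>) \<le> 1"
  proof -
    have "disjoint_family_on pts (set L)"
      unfolding disjoint_family_on_def
    proof (intro ballI impI)
      fix a b assume "a \<in> set L" "b \<in> set L" "a \<noteq> b"
      then obtain i j where "i < length L" "j < length L" "L ! i = a" "L ! j = b"
        by (auto simp: in_set_conv_nth)
      with \<open>a \<noteq> b\<close> disj show "pts a \<inter> pts b = {}" by blast
    qed
    hence "(\<Sum>\<rho>\<in>set L. pr \<rho>) = measure_pmf.prob Dstar (\<Union>\<rho>\<in>set L. pts \<rho>)"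
      unfolding pr_def by (intro measure_pmf.finite_measure_finite_Union[symmetric]) auto
    thus ?thesis by simp
  qed
  have "measure_pmf.expectation RH (\<lambda>H. error (list_compose L H) P) \<le>
        measure_pmf.expectation RH (\<lambda>H. \<Sum>\<rho>\<in>set L. g \<rho> H)"
  proof (intro integral_mono step1)
    show "integrable (measure_pmf RH) (\<lambda>H. error (list_compose L H) P)"
      by (rule integrable_pmf_bounded[where B=1]) (simp add: error_def)
    show "integrable (measure_pmf RH) (\<lambda>H. \<Sum>\<rho>\<in>set L. g \<rho> H)"
      by (rule Bochner_Integration.integrable_sum, rule integrable_pmf_bounded[where B=1], rule gb)
  qed
  also have "\<dots> = (\<Sum>\<rho>\<in>set L. measure_pmf.expectation RH (g \<rho>))"
    by (intro Bochner_Integration.integral_sum integrable_pmf_bounded[where B=1] gb)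
  also have "\<dots> \<le> (\<Sum>\<rho>\<in>set L. pr \<rho> * e + real m / real (Suc mtrain))"
    by (intro sum_mono step3)
  also have "\<dots> = e * (\<Sum>\<rho>\<in>set L. pr \<rho>) + real (card (set L)) * (real m / real (Suc mtrain))"
    by (simp add: sum.distrib sum_distrib_left mult.commute)
  also have "\<dots> \<le> e * 1 + real s * (real m / real (Suc mtrain))"
  proof (intro add_mono mult_left_mono mult_right_mono sumpr e0)
    show "real (card (set L)) \<le> real s" using card_length[of L] lenL by simp
  qed simp
  also have "\<dots> \<le> e + e"
  proof -
    have "real s * (lg / \<epsilon>) * real m \<le> real s * (lg / \<epsilon>) * max (2 * real m) 8"
      using lpos eps by (intro mult_left_mono) auto
    also have "\<dots> \<le> real mtrain" using mtrain by (simp add: lg_def)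
    also have "\<dots> \<le> real (Suc mtrain)" by simp
    finally have h: "real s * real m * lg \<le> real (Suc mtrain) * \<epsilon>"
      using eps by (simp add: field_simps)
    have "real s * (real m / real (Suc mtrain)) = (real s * real m * lg) / (real (Suc mtrain) * lg)"
      using lpos by (simp del: of_nat_Suc)
    also have "\<dots> \<le> (real (Suc mtrain) * \<epsilon>) / (real (Suc mtrain) * lg)"
      using h lpos by (intro divide_right_mono) auto
    also have "\<dots> = e" using lpos by (simp add: e_def lg_def)
    finally show ?thesis by simp
  qed
  finally show ?thesis by (simp add: e_def RH_def P_def)
qed

end
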